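(* Let $\mathcal T$ be a transducer with $n\ge1$ states. If $\mathcal T$ is zero-avoiding with minimum bound $k$, then $k<n$.
   Context: A transducer is a quintuple $\mathcal T=(Q,\Sigma,E,I,F)$ with finite state set $Q$, finite alphabet $\Sigma$, finite transition set $E\subseteq Q\times\{x/y : x,y\in\Sigma\cup\{\lambda\}\}\times Q$ ($\lambda$ the empty word), nonempty initial set $I\subseteq Q$, final set $F\subseteq Q$. A path is a finite sequence of consecutive transitions; its label $x_1\cdots x_\ell/y_1\cdots y_\ell$ is formed by concatenating input parts and output parts. A computation is a path that is empty or starts at an initial state. For a path $P$ with label $u/v$, the length discrepancy is $d(P)=|u|-|v|$, and $d_{max}(P)=\max\{|d(Q)| : Q\text{ a prefix of }P\}$ (prefixes being initial segments of transitions, including the empty path). $\mathcal T$ is zero-avoiding with bound $k\in\mathbb N_0$ if for every computation $P$ of $\mathcal T$, $d_{max}(P)>k$ implies $d(P)\neq 0$. It is zero-avoiding with minimum bound $k$ if it is zero-avoiding with bound $k$ but not with bound $k-1$. *)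

theory Defs
  imports Main
begin

text \<open>A label x/y with x, y in Sigma \<union> {lambda}; lambda is represented by None.\<close>
type_synonym 'a label = "'a option \<times> 'a option"
type_synonym ('q, 'a) trans = "'q \<times> 'a label \<times> 'q"

record ('q, 'a) transducer =
  states :: "'q set"
  alph :: "'a set"
  edges :: "('q, 'a) trans set"
  initial :: "'q set"
  final :: "'q set"

definition sym_ok :: "'a set \<Rightarrow> 'a option \<Rightarrow> bool" where
  "sym_ok S x \<longleftrightarrow> (case x of None \<Rightarrow> True | Some a \<Rightarrow> a \<in> S)"

definition transducer :: "('q, 'a) transducer \<Rightarrow> bool" where
  "transducer T \<longleftrightarrow> finite (states T) \<and> finite (alph T) \<and> finite (edges T)
     \<and> (\<forall>(p, (x, y), q) \<in> edges T. p \<in> states T \<and> q \<in> states T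
            \<and> sym_ok (alph T) x \<and> sym_ok (alph T) y)
     \<and> initial T \<noteq> {} \<and> initial T \<subseteq> states T \<and> final T \<subseteq> states T"

fun src :: "('q, 'a) trans \<Rightarrow> 'q" where "src (p, l, q) = p"
fun tgt :: "('q, 'a) trans \<Rightarrow> 'q" where "tgt (p, l, q) = q"

definition is_path :: "('q, 'a) transducer \<Rightarrow> ('q, 'a) trans list \<Rightarrow> bool" where
  "is_path T P \<longleftrightarrow> set P \<subseteq> edges T \<and> (\<forall>i. Suc i < length P \<longrightarrow> tgt (P ! i) = src (P ! Suc i))"

definition computation :: "('q, 'a) transducer \<Rightarrow> ('q, 'a) trans list \<Rightarrow> bool" where
  "computation T P \<longleftrightarrow> is_path T P \<and> (P = [] \<or> src (hd P) \<in> initial T)"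

definition olen :: "'a option \<Rightarrow> int" where
  "olen x = (case x of None \<Rightarrow> 0 | Some _ \<Rightarrow> 1)"

definition disc :: "('q, 'a) trans list \<Rightarrow> int" where
  "disc P = (\<Sum>t\<leftarrow>P. (case t of (p, (x, y), q) \<Rightarrow> olen x - olen y))"

definition dmax :: "('q, 'a) trans list \<Rightarrow> int" where
  "dmax P = Max {\<bar>disc (take i P)\<bar> | i. i \<le> length P}"

definition zero_avoiding :: "('q, 'a) transducer \<Rightarrow> nat \<Rightarrow> bool" where
  "zero_avoiding T k \<longleftrightarrow> (\<forall>P. computation T P \<longrightarrow> dmax P > int k \<longrightarrow> disc P \<noteq> 0)"

text \<open>Minimum bound k: zero-avoiding with bound k but not with bound k-1
  (for k = 0 the second condition is vacuous, since no transducer is zero-avoiding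
  with bound -1: the empty computation has d = 0 and d_max = 0 > -1).\<close>
definition zero_avoiding_min :: "('q, 'a) transducer \<Rightarrow> nat \<Rightarrow> bool" where
  "zero_avoiding_min T k \<longleftrightarrow> zero_avoiding T k \<and> (k > 0 \<longrightarrow> \<not> zero_avoiding T (k - 1))"

end

theory Submission
  imports Defs
begin

lemma is_path_Nil[simp]: "is_path T []"
  by (simp add: is_path_def)

lemma is_path_Cons: "is_path T (x # xs) \<longleftrightarrow> x \<in> edges T \<and> is_path T xs \<and> (xs \<noteq> [] \<longrightarrow> tgt x = src (hd xs))"
proof
  assume h: "is_path T (x # xs)"
  have a: "x \<in> edges T" "set xs \<subseteq> edges T" using h by (auto simp: is_path_def)
  have b: "\<forall>i. Suc i < length xs \<longrightarrow> tgt (xs ! i) = src (xs ! Suc i)"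
  proof (intro allI impI)
    fix i assume "Suc i < length xs"
    then have "Suc (Suc i) < length (x # xs)" by simp
    with h show "tgt (xs ! i) = src (xs ! Suc i)" unfolding is_path_def by (metis nth_Cons_Suc)
  qed
  have c: "xs \<noteq> [] \<longrightarrow> tgt x = src (hd xs)"
  proof
    assume "xs \<noteq> []"
    then have "Suc 0 < length (x # xs)" by simp
    with h have "tgt ((x#xs) ! 0) = src ((x#xs) ! Suc 0)" unfolding is_path_def by blast
    then show "tgt x = src (hd xs)" using \<open>xs \<noteq> []\<close> by (simp add: hd_conv_nth)
  qed
  show "x \<in> edges T \<and> is_path T xs \<and> (xs \<noteq> [] \<longrightarrow> tgt x = src (hd xs))"
    using a b c by (simp add: is_path_def)
next
  assume h: "x \<in> edges T \<and> is_path T xs \<and> (xs \<noteq> [] \<longrightarrow> tgt x = src (hd xs))"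
  show "is_path T (x # xs)" unfolding is_path_def
  proof (intro conjI allI impI)
    show "set (x # xs) \<subseteq> edges T" using h by (auto simp: is_path_def)
  next
    fix i assume i: "Suc i < length (x # xs)"
    show "tgt ((x # xs) ! i) = src ((x # xs) ! Suc i)"
    proof (cases i)
      case 0 then show ?thesis using h i by (auto simp: hd_conv_nth)
    next
      case (Suc j) then show ?thesis using h i by (auto simp: is_path_def)
    qed
  qed
qed

lemma is_path_append: "is_path T (xs @ ys) \<longleftrightarrow> is_path T xs \<and> is_path T ys \<and> (xs \<noteq> [] \<longrightarrow> ys \<noteq> [] \<longrightarrow> tgt (last xs) = src (hd ys))"
  by (induction xs) (auto simp: is_path_Cons)

lemma rep_path:
  assumes "is_path T C" "C \<noteq> []" "tgt (last C) = src (hd C)"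
  shows "is_path T (concat (replicate m C)) \<and> (m > 0 \<longrightarrow> hd (concat (replicate m C)) = hd C \<and> last (concat (replicate m C)) = last C)"
proof (induction m)
  case 0 then show ?case by simp
next
  case (Suc m)
  then show ?case using assms by (cases m) (auto simp: is_path_append)
qed

lemma pump_path:
  assumes "is_path T (A @ C @ B)" "C \<noteq> []" "tgt (last C) = src (hd C)" "m > 0"
  shows "is_path T (A @ concat (replicate m C) @ B)"
proof -
  define R where "R = concat (replicate m C)"
  have pc: "is_path T C" "is_path T A" "is_path T B" using assms(1) by (auto simp: is_path_append)
  have R: "is_path T R" "hd R = hd C" "last R = last C" "R \<noteq> []"
    using rep_path[OF pc(1) assms(2,3), of m] assms(2,4) unfolding R_def by auto
  have c1: "A \<noteq> [] \<longrightarrow> tgt (last A) = src (hd C)" using assms(1,2) by (auto simp: is_path_append)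
  have c2: "B \<noteq> [] \<longrightarrow> tgt (last C) = src (hd B)" using assms(1,2) by (auto simp: is_path_append)
  show ?thesis unfolding R_def[symmetric] using R c1 c2 pc by (auto simp: is_path_append)
qed

lemma hd_pump: "C \<noteq> [] \<Longrightarrow> m > 0 \<Longrightarrow> hd (A @ concat (replicate m C) @ B) = hd (A @ C @ B)"
  by (cases A; cases m) auto

lemma disc_Nil[simp]: "disc [] = 0" by (simp add: disc_def)
lemma disc_append: "disc (xs @ ys) = disc xs + disc ys" by (simp add: disc_def)
lemma disc_rep: "disc (concat (replicate m C)) = int m * disc C"
  by (induction m) (auto simp: disc_append algebra_simps)

lemma disc_single: "\<bar>disc [t]\<bar> \<le> 1"
  by (auto simp: disc_def olen_def split: option.splits prod.splits)

lemma disc_step: "\<bar>disc (take (Suc i) P) - disc (take i P)\<bar> \<le> 1"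
proof (cases "i < length P")
  case True
  then show ?thesis using disc_single[of "P ! i"] by (simp add: take_Suc_conv_app_nth disc_append)
next
  case False then show ?thesis by simp
qed

lemma seg: "i \<le> j \<Longrightarrow> take i xs @ drop i (take j xs) = take j xs"
  by (metis append_take_drop_id min.absorb1 take_take)

lemma dmax_ge: "i \<le> length Q \<Longrightarrow> \<bar>disc (take i Q)\<bar> \<le> dmax Q"
  unfolding dmax_def by (rule Max_ge) (auto intro: finite_image_set)

lemma ivt:
  fixes g :: "nat \<Rightarrow> int"
  assumes step: "\<And>i. \<bar>g (Suc i) - g i\<bar> \<le> 1"
  shows "g a \<le> j \<Longrightarrow> j \<le> g (a + d) \<Longrightarrow> \<exists>i. a \<le> i \<and> i \<le> a + d \<and> g i = j"
proof (induction d)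
  case 0 then show ?case by auto
next
  case (Suc d)
  show ?case
  proof (cases "j \<le> g (a + d)")
    case True then show ?thesis using Suc by fastforce
  next
    case False
    then have "j = g (a + Suc d)" using Suc.prems step[of "a + d"] by simp
    then show ?thesis by (intro exI[of _ "a + Suc d"]) auto
  qed
qed

lemma ivt':
  fixes g :: "nat \<Rightarrow> int"
  assumes step: "\<And>i. \<bar>g (Suc i) - g i\<bar> \<le> 1"
  shows "a \<le> b \<Longrightarrow> g a \<le> j \<Longrightarrow> j \<le> g b \<Longrightarrow> \<exists>i. a \<le> i \<and> i \<le> b \<and> g i = j"
  using ivt[where g=g, OF step, of a j "b - a"] by auto

lemma ascent:
  fixes g :: "nat \<Rightarrow> int" and st :: "nat \<Rightarrow> 'q"
  assumes step: "\<And>i. \<bar>g (Suc i) - g i\<bar> \<le> 1"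
    and ab: "a \<le> b" and gk: "g a + int k \<le> g b"
    and S: "finite S" "card S \<le> k" and st: "\<And>i. a \<le> i \<Longrightarrow> i \<le> b \<Longrightarrow> st i \<in> S"
  shows "\<exists>p p'. a \<le> p \<and> p < p' \<and> p' \<le> b \<and> st p = st p' \<and> g p < g p'"
proof -
  define u where "u j = (LEAST i. a \<le> i \<and> g i = g a + int j)" for j
  have ex: "\<exists>i. a \<le> i \<and> i \<le> b \<and> g i = g a + int j" if "j \<le> k" for j
    using ivt'[where g=g, OF step ab, of "g a + int j"] that gk by auto
  have u: "a \<le> u j \<and> u j \<le> b \<and> g (u j) = g a + int j" if jk: "j \<le> k" for j
  proof -
    obtain i where i: "a \<le> i" "i \<le> b" "g i = g a + int j" using ex[OF jk] by blast
    have 1: "a \<le> u j \<and> g (u j) = g a + int j" unfolding u_def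
      by (rule LeastI_ex) (use i in blast)
    have "u j \<le> i" unfolding u_def by (rule Least_le) (use i in blast)
    then show ?thesis using 1 i by auto
  qed
  have "\<not> inj_on (st \<circ> u) {0..k}"
  proof
    assume "inj_on (st \<circ> u) {0..k}"
    moreover have "(st \<circ> u) ` {0..k} \<subseteq> S" using u st by auto
    ultimately have "card {0..k} \<le> card S" using card_inj_on_le S(1) by blast
    then show False using S(2) by simp
  qed
  then obtain j1 j2 where j: "j1 \<le> k" "j2 \<le> k" "j1 \<noteq> j2" "st (u j1) = st (u j2)"
    unfolding inj_on_def by auto
  have key: "\<exists>p p'. a \<le> p \<and> p < p' \<and> p' \<le> b \<and> st p = st p' \<and> g p < g p'"
    if jj: "j1 < j2" "j1 \<le> k" "j2 \<le> k" "st (u j1) = st (u j2)" for j1 j2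
  proof -
    have u2: "a \<le> u j2" "u j2 \<le> b" "g (u j2) = g a + int j2" using u that by auto
    obtain i where i: "a \<le> i" "i \<le> u j2" "g i = g a + int j1"
      using ivt'[where g=g, OF step u2(1), of "g a + int j1"] u2 jj by auto
    have "u j1 \<le> i" unfolding u_def by (rule Least_le) (use i in blast)
    moreover have "i \<noteq> u j2" using i u2 jj by auto
    ultimately have "u j1 < u j2" using i by auto
    then show ?thesis using u[of j1] u2 that by (intro exI[of _ "u j1"] exI[of _ "u j2"]) auto
  qed
  show ?thesis
  proof (cases "j1 < j2")
    case True then show ?thesis using key j by blast
  next
    case False then have "j2 < j1" using j by auto
    then show ?thesis using key j by metis
  qed
qed

definition stp :: "('q, 'a) trans list \<Rightarrow> nat \<Rightarrow> 'q" where
  "stp P i = (if i = 0 then src (hd P) else tgt (P ! (i - 1)))"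

lemma cycle_seg:
  assumes P: "is_path T P" and pp: "p < p'" "p' \<le> length P" and eq: "stp P p = stp P p'"
  shows "drop p (take p' P) \<noteq> [] \<and> tgt (last (drop p (take p' P))) = src (hd (drop p (take p' P)))"
proof -
  let ?C = "drop p (take p' P)"
  have ne: "?C \<noteq> []" using pp by simp
  have h: "hd ?C = P ! p" using pp by (simp add: hd_drop_conv_nth)
  have l: "last ?C = P ! (p' - 1)" using pp ne
    by (simp add: last_conv_nth)
  have s1: "src (P ! p) = stp P p"
  proof (cases p)
    case 0 then have "P \<noteq> []" using pp by auto
    then show ?thesis using 0 by (simp add: stp_def hd_conv_nth)
  next
    case (Suc q)
    then have "tgt (P ! q) = src (P ! Suc q)" using P pp unfolding is_path_def by auto
    then show ?thesis using Suc by (simp add: stp_def)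
  qed
  have s2: "tgt (P ! (p' - 1)) = stp P p'" using pp by (simp add: stp_def)
  show ?thesis using ne h l s1 s2 eq by simp
qed

lemma stp_states:
  assumes "transducer T" "is_path T P" "P \<noteq> []" "i \<le> length P"
  shows "stp P i \<in> states T"
proof -
  have E: "\<And>e. e \<in> edges T \<Longrightarrow> src e \<in> states T \<and> tgt e \<in> states T"
    using assms(1) unfolding transducer_def by fastforce
  have set: "set P \<subseteq> edges T" using assms(2) by (simp add: is_path_def)
  show ?thesis
  proof (cases i)
    case 0 then show ?thesis using E set assms(3) by (simp add: stp_def) (meson hd_in_set subsetD)
  next
    case (Suc j) then have "P ! j \<in> edges T" using set assms(4) Suc by (metis Suc_le_lessD nth_mem subsetD)
    then show ?thesis using E Suc by (simp add: stp_def)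
  qed
qed

theorem proposition2:
  fixes T :: "('q, 'a) transducer" and n k :: nat
  assumes "transducer T"
    and "n = card (states T)" and "n \<ge> 1"
    and "zero_avoiding_min T k"
  shows "k < n"
proof (rule ccontr)
  assume "\<not> k < n"
  then have kn: "n \<le> k" by simp
  with assms(3) have k0: "k > 0" by simp
  have za: "zero_avoiding T k" and nza: "\<not> zero_avoiding T (k - 1)"
    using assms(4) k0 unfolding zero_avoiding_min_def by auto
  obtain P where comp: "computation T P" and dm: "dmax P > int (k - 1)" and d0: "disc P = 0"
    using nza unfolding zero_avoiding_def by auto
  have path: "is_path T P" using comp by (simp add: computation_def)
  define D where "D i = disc (take i P)" for i
  have fin: "finite {\<bar>disc (take i P)\<bar> | i. i \<le> length P}" by (auto intro: finite_image_set)
  have "dmax P \<in> {\<bar>disc (take i P)\<bar> | i. i \<le> length P}"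
    unfolding dmax_def by (rule Max_in[OF fin]) auto
  then obtain i0 where i0: "i0 \<le> length P" "\<bar>D i0\<bar> = dmax P" unfolding D_def by auto
  have Dk: "\<bar>D i0\<bar> \<ge> int k" using i0 dm k0 by simp
  have Pne: "P \<noteq> []" using Dk k0 i0 unfolding D_def by auto
  define \<sigma> :: int where "\<sigma> = (if D i0 \<ge> 0 then 1 else -1)"
  define g where "g i = \<sigma> * D i" for i
  have sg: "\<sigma> * \<sigma> = 1" by (simp add: \<sigma>_def)
  have gi0: "g i0 = \<bar>D i0\<bar>" by (simp add: g_def \<sigma>_def)
  have g0: "g 0 = 0" by (simp add: g_def D_def)
  have glen: "g (length P) = 0" by (simp add: g_def D_def d0)
  have step: "\<bar>g (Suc i) - g i\<bar> \<le> 1" for i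
  proof -
    have "\<bar>g (Suc i) - g i\<bar> = \<bar>D (Suc i) - D i\<bar>"
      by (simp add: g_def \<sigma>_def right_diff_distrib[symmetric] abs_mult)
    then show ?thesis using disc_step[of i P] by (simp add: D_def)
  qed
  have step': "\<bar>(- g (Suc i)) - (- g i)\<bar> \<le> 1" for i using step[of i] by simp
  have fS: "finite (states T)" "card (states T) \<le> k" using assms(1,2) kn by (auto simp: transducer_def)
  have stS: "\<And>i. i \<le> length P \<Longrightarrow> stp P i \<in> states T"
    using stp_states[OF assms(1) path Pne] by blast
  obtain p1 p1' where a: "0 \<le> p1" "p1 < p1'" "p1' \<le> i0" "stp P p1 = stp P p1'" "g p1 < g p1'"
    using ascent[where g=g and st="stp P", OF step _ _ fS, of 0 i0] g0 gi0 Dk i0 stS by auto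
  obtain p2 p2' where b: "i0 \<le> p2" "p2 < p2'" "p2' \<le> length P" "stp P p2 = stp P p2'" "- g p2 < - g p2'"
    using ascent[where g="\<lambda>i. - g i" and st="stp P", OF step' _ _ fS, of i0 "length P"] glen gi0 Dk i0 stS
    by auto
  define A where "A = take p1 P"
  define C1 where "C1 = drop p1 (take p1' P)"
  define M where "M = drop p1' (take p2 P)"
  define C2 where "C2 = drop p2 (take p2' P)"
  define Z where "Z = drop p2' P"
  have t1: "take p1' P = A @ C1" unfolding A_def C1_def using seg[of p1 p1' P] a by simp
  have t2: "take p2 P = take p1' P @ M" unfolding M_def using seg[of p1' p2 P] a b by simp
  have t3: "take p2' P = take p2 P @ C2" unfolding C2_def using seg[of p2 p2' P] b by simp
  have Pdec: "P = A @ C1 @ M @ C2 @ Z" using t1 t2 t3 unfolding Z_def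
    by (metis append.assoc append_take_drop_id)
  have cy1: "C1 \<noteq> [] \<and> tgt (last C1) = src (hd C1)"
    unfolding C1_def using cycle_seg[OF path, of p1 p1'] a i0 by auto
  have cy2: "C2 \<noteq> [] \<and> tgt (last C2) = src (hd C2)"
    unfolding C2_def using cycle_seg[OF path, of p2 p2'] b by auto
  define e1 where "e1 = g p1' - g p1"
  define e2 where "e2 = g p2 - g p2'"
  have e1: "e1 > 0" "\<sigma> * disc C1 = e1"
    using a t1 unfolding e1_def g_def D_def A_def by (auto simp: disc_append algebra_simps)
  have e2: "e2 > 0" "\<sigma> * disc C2 = - e2"
    using b t3 unfolding e2_def g_def D_def by (auto simp: disc_append algebra_simps)
  define m1 where "m1 = nat e2 + 1"
  define m2 where "m2 = nat e1 + 1"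
  define R1 where "R1 = concat (replicate m1 C1)"
  define R2 where "R2 = concat (replicate m2 C2)"
  define Q where "Q = A @ R1 @ M @ R2 @ Z"
  have pQ1: "is_path T ((A @ C1 @ M) @ R2 @ Z)"
    unfolding R2_def m2_def using pump_path[of T "A @ C1 @ M" C2 Z "nat e1 + 1"] path Pdec cy2 by simp
  have pQ: "is_path T Q"
    unfolding Q_def R1_def m1_def using pump_path[of T A C1 "M @ R2 @ Z" "nat e2 + 1"] pQ1 cy1 by simp
  have hdQ: "hd Q = hd P"
    unfolding Q_def R1_def m1_def using hd_pump[of C1 "nat e2 + 1" A "M @ R2 @ Z"] cy1 Pdec
    by (cases A) auto
  have Qne: "Q \<noteq> []" unfolding Q_def R1_def m1_def using cy1 by simp
  have compQ: "computation T Q"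
    using comp pQ hdQ Qne Pne unfolding computation_def by auto
  have "\<sigma> * disc Q = \<sigma> * disc P + (int m1 - 1) * e1 - (int m2 - 1) * e2"
  proof -
    have "\<sigma> * disc Q = \<sigma> * disc A + int m1 * (\<sigma> * disc C1) + \<sigma> * disc M + int m2 * (\<sigma> * disc C2) + \<sigma> * disc Z"
      unfolding Q_def R1_def R2_def by (simp add: disc_append disc_rep algebra_simps)
    moreover have "\<sigma> * disc P = \<sigma> * disc A + (\<sigma> * disc C1) + \<sigma> * disc M + (\<sigma> * disc C2) + \<sigma> * disc Z"
      using Pdec by (simp add: disc_append algebra_simps)
    ultimately show ?thesis using e1 e2 by (simp add: algebra_simps)
  qed
  also have "\<dots> = 0" using d0 e1 e2 by (simp add: m1_def m2_def)
  finally have dQ: "disc Q = 0" using sg by (simp add: \<sigma>_def split: if_splits)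
  define X where "X = A @ R1 @ take (i0 - p1') M"
  have QX: "Q = X @ (drop (i0 - p1') M @ R2 @ Z)" unfolding Q_def X_def by simp
  have tX: "take (length X) Q = X" unfolding QX by simp
  have lX: "length X \<le> length Q" unfolding QX by simp
  have Mi0: "take (i0 - p1') M = drop p1' (take i0 P)"
    unfolding M_def using a b by (simp add: take_drop)
  have ti0: "take i0 P = take p1' P @ take (i0 - p1') M"
    unfolding Mi0 using seg[of p1' i0 P] a by simp
  have "\<sigma> * disc X = g i0 + (int m1 - 1) * e1"
    unfolding X_def R1_def g_def D_def using ti0 t1 e1
    by (simp add: disc_append disc_rep algebra_simps)
  also have "\<dots> > int k"
  proof -
    have p: "e2 * e1 > 0" using e1 e2 by simp
    have "(int m1 - 1) * e1 = e2 * e1" using e2 by (simp add: m1_def)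
    then show ?thesis using p gi0 Dk by linarith
  qed
  finally have "\<bar>disc X\<bar> > int k" by (auto simp: \<sigma>_def split: if_splits)
  then have "dmax Q > int k" using dmax_ge[OF lX] tX by simp
  then show False using za compQ dQ unfolding zero_avoiding_def by auto
qed

end
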